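(* Consider the private bug bounty model described in the context, with given prizes $\boldsymbol v=(v^1,\dots,v^L)$, artificial-bug prizes $\boldsymbol v_a=(v_a^1,\dots,v_a^K)$ and artificial-bug complexities $\boldsymbol q_a=(q_a^1,\dots,q_a^K)$. Let $c^*$ denote the symmetric equilibrium threshold. If $\Psi(\underline c)\le \underline c$, then $c^*=\underline c$. If $\Psi(\overline c)\ge\overline c$, then $c^*=\overline c$. Otherwise, the symmetric equilibrium threshold $c^*=c^*(\boldsymbol v,\boldsymbol v_a,\boldsymbol q_a)$ is the unique solution $\hat c$ of $$\hat c=\Psi(\hat c;\boldsymbol v,\boldsymbol v_a,\boldsymbol q_a).$$
   Context: Private bug bounty model. There are $L$ potential organic bugs $l=1,\dots,L$; bug $l$ exists with probability $\mu^l\in(0,1]$, independently across bugs, and has complexity $q^l\in(0,1]$. There are $n$ risk-neutral agents. Agent $i$ has a private search cost $c_i$, drawn i.i.d. across agents from a distribution $F$ with support $[\underline c,\overline c]$, where $-\infty\le\underline c<\overline c\le\infty$ and $\overline c>0$; $F$ is continuous, has full support, has a finite density $f$, and $F/f$ is non-decreasing. The designer sets prizes $v^l\ge0$ for the organic bugs and inserts $K$ artificial bugs (which exist with certainty) with prizes $v_a^k\ge0$ and complexities $q_a^k\in[0,1]$. Each agent chooses whether to search, paying $c_i$ if so. A searching agent finds each existing bug of complexity $q$ with probability $q$, independently across agents and bugs; the prize of each found bug is paid to one of the agents who found it, chosen uniformly at random. For a threshold $\hat c$, $\Phi(\hat c;q)$ denotes the probability that a searching agent wins the prize of an existing bug of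 complexity $q$ when each of the other $n-1$ agents searches if and only if his/her cost is at most $\hat c$. Define $\Psi(\hat c;\boldsymbol v,\boldsymbol v_a,\boldsymbol q_a)=\sum_l v^l\mu^l\Phi(\hat c;q^l)+\sum_k v_a^k\Phi(\hat c;q_a^k)$ (written $\Psi(\hat c)$ when the prizes are fixed). A threshold strategy $\hat c$ means: search if and only if own cost is at most $\hat c$. The symmetric equilibrium threshold is the common threshold used by all agents in a symmetric Bayes–Nash equilibrium. *)

theory Defs
  imports "HOL-Analysis.Analysis" "HOL-Library.Extended_Real"
begin

definition cost_support :: "ereal \<Rightarrow> ereal \<Rightarrow> real set" where
  "cost_support cl cu = {c. cl \<le> ereal c \<and> ereal c \<le> cu}"

definition admissible_cost_dist ::
  "ereal \<Rightarrow> ereal \<Rightarrow> (real \<Rightarrow> real) \<Rightarrow> (real \<Rightarrow> real) \<Rightarrow> bool" where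
  "admissible_cost_dist cl cu F f \<longleftrightarrow>
     cl < cu \<and> 0 < cu \<and>
     mono F \<and> continuous_on UNIV F \<and>
     (F \<longlongrightarrow> 0) at_bot \<and> (F \<longlongrightarrow> 1) at_top \<and>
     (\<forall>c. ereal c \<le> cl \<longrightarrow> F c = 0) \<and>
     (\<forall>c. cu \<le> ereal c \<longrightarrow> F c = 1) \<and>
     strict_mono_on (cost_support cl cu) F \<and>
     (\<forall>c. cl < ereal c \<and> ereal c < cu \<longrightarrow> (F has_real_derivative f c) (at c)) \<and>
     mono_on {c. cl < ereal c \<and> ereal c < cu} (\<lambda>c. F c / f c)"

text \<open>Phi n F q ch: probability that a searching agent wins the prize of an existing bug of
  complexity q when each of the other n-1 agents searches iff his cost is at most ch.
  The agent finds the bug with probability q; each other agent independently finds it with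
  probability p = q * F ch; the prize goes uniformly to one of the finders.\<close>
definition Phi :: "nat \<Rightarrow> (real \<Rightarrow> real) \<Rightarrow> real \<Rightarrow> real \<Rightarrow> real" where
  "Phi n F q ch =
     (let p = q * F ch in
      q * (\<Sum>k\<in>{0..n-1}. real ((n-1) choose k) * p ^ k * (1 - p) ^ (n - 1 - k) / real (k + 1)))"

definition Psi :: "nat \<Rightarrow> (real \<Rightarrow> real) \<Rightarrow> nat \<Rightarrow> (nat \<Rightarrow> real) \<Rightarrow> (nat \<Rightarrow> real) \<Rightarrow>
    (nat \<Rightarrow> real) \<Rightarrow> nat \<Rightarrow> (nat \<Rightarrow> real) \<Rightarrow> (nat \<Rightarrow> real) \<Rightarrow> real \<Rightarrow> real" where
  "Psi n F L mu q v K va qa ch =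
     (\<Sum>l<L. v l * mu l * Phi n F (q l) ch) + (\<Sum>k<K. va k * Phi n F (qa k) ch)"

text \<open>ch is a symmetric (Bayes-Nash) equilibrium threshold: when all other agents use
  threshold ch, a searching agent of cost c gets expected payoff Psi ch - c (not searching
  gives 0); searching iff cost \<le> ch must be a best response for every cost type in the
  support (up to the single, null, type c = ch).\<close>
definition sym_eq_threshold :: "ereal \<Rightarrow> ereal \<Rightarrow> (real \<Rightarrow> real) \<Rightarrow> real \<Rightarrow> bool" where
  "sym_eq_threshold cl cu Psi_fun ch \<longleftrightarrow>
     ch \<in> cost_support cl cu \<and>
     (\<forall>c\<in>cost_support cl cu. c < ch \<longrightarrow> 0 \<le> Psi_fun ch - c) \<and>
     (\<forall>c\<in>cost_support cl cu. ch < c \<longrightarrow> Psi_fun ch - c \<le> 0)"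

end

theory Submission
  imports Defs
begin

lemma binsum_times:
  fixes p :: real
  shows "p * real (Suc m) * (\<Sum>k\<in>{0..m}. real (m choose k) * p^k * (1-p)^(m-k) / real (k+1))
         = 1 - (1-p)^(Suc m)"
proof -
  have trm: "p * real (Suc m) * (real (m choose k) * p^k * (1-p)^(m-k) / real (k+1))
      = real (Suc m choose Suc k) * p^(Suc k) * (1-p)^(Suc m - Suc k)" for k
  proof -
    have "real (Suc m) * real (m choose k) = real (Suc m choose Suc k) * real (Suc k)"
      by (metis Suc_times_binomial_eq of_nat_mult)
    then have e: "real (Suc m) * real (m choose k) / real (Suc k) = real (Suc m choose Suc k)"
      by (simp add: divide_eq_eq del: of_nat_Suc)
    have "p * real (Suc m) * (real (m choose k) * p^k * (1-p)^(m-k) / real (k+1))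
       = (real (Suc m) * real (m choose k) / real (Suc k)) * p^(Suc k) * (1-p)^(m-k)"
      by (simp only: power_Suc times_divide_eq_right times_divide_eq_left mult_ac Suc_eq_plus1 power_add power_one_right)
    then show ?thesis by (simp only: e diff_Suc_Suc)
  qed
  have "p * real (Suc m) * (\<Sum>k\<in>{0..m}. real (m choose k) * p^k * (1-p)^(m-k) / real (k+1))
     = (\<Sum>k\<le>m. real (Suc m choose Suc k) * p^(Suc k) * (1-p)^(Suc m - Suc k))"
    unfolding sum_distrib_left atLeast0AtMost by (rule sum.cong[OF refl trm])
  also have "\<dots> = (\<Sum>k\<le>Suc m. real (Suc m choose k) * p^k * (1-p)^(Suc m - k)) - (1-p)^(Suc m)"
    by (subst sum.atMost_Suc_shift) simp
  also have "(\<Sum>k\<le>Suc m. real (Suc m choose k) * p^k * (1-p)^(Suc m - k)) = (p + (1-p))^(Suc m)"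
    by (rule binomial_ring[symmetric])
  finally show ?thesis by simp
qed

lemma binsum:
  fixes p :: real
  shows "(\<Sum>k\<in>{0..m}. real (m choose k) * p^k * (1-p)^(m-k) / real (k+1))
         = (\<Sum>j<Suc m. (1-p)^j) / real (Suc m)"
proof (cases "p = 0")
  case True
  have "(\<Sum>k\<in>{0..m}. real (m choose k) * p^k * (1-p)^(m-k) / real (k+1))
     = (\<Sum>k\<in>{0..m}. if k = 0 then 1 else 0)"
    by (rule sum.cong) (auto simp: True)
  then show ?thesis using True by simp
next
  case False
  have g: "p * (\<Sum>j<Suc m. (1-p)^j) = 1 - (1-p)^(Suc m)"
    using power_diff_1_eq[of "1-p" "Suc m"] by (simp add: algebra_simps)
  have "p * real (Suc m) * (\<Sum>k\<in>{0..m}. real (m choose k) * p^k * (1-p)^(m-k) / real (k+1))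
      = p * real (Suc m) * ((\<Sum>j<Suc m. (1-p)^j) / real (Suc m))"
    using binsum_times[of p m] g by simp
  then have "real (Suc m) * (\<Sum>k\<in>{0..m}. real (m choose k) * p^k * (1-p)^(m-k) / real (k+1))
      = (\<Sum>j<Suc m. (1-p)^j)" using False by (simp del: of_nat_Suc sum.lessThan_Suc)
  then show ?thesis by (simp add: field_simps del: of_nat_Suc sum.lessThan_Suc)
qed

lemma Phi_eq:
  assumes "1 \<le> n"
  shows "Phi n F q ch = q * (\<Sum>j<n. (1 - q * F ch)^j) / real n"
proof -
  obtain m where n: "n = Suc m" using assms by (cases n) auto
  show ?thesis unfolding Phi_def Let_def n using binsum[of m "q * F ch"] by simp
qed

lemma Phi_mono:
  assumes "1 \<le> n" "0 \<le> q" "q \<le> 1" "0 \<le> F x" "F x \<le> F y" "F y \<le> 1"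
  shows "Phi n F q y \<le> Phi n F q x"
proof -
  have "(\<Sum>j<n. (1 - q * F y)^j) \<le> (\<Sum>j<n. (1 - q * F x)^j)"
  proof (rule sum_mono, rule power_mono)
    fix j show "1 - q * F y \<le> 1 - q * F x" using assms by (simp add: mult_left_mono)
    show "0 \<le> 1 - q * F y" using assms mult_le_one[of q "F y"] by linarith
  qed
  then show ?thesis unfolding Phi_eq[OF assms(1)] using assms
    by (simp add: divide_right_mono mult_left_mono)
qed

lemma Phi_le:
  assumes "1 \<le> n" "0 \<le> q" "q \<le> 1" "0 \<le> F x" "F x \<le> 1"
  shows "0 \<le> Phi n F q x \<and> Phi n F q x \<le> q"
proof -
  have b: "0 \<le> 1 - q * F x" "1 - q * F x \<le> 1" using assms by (auto simp: mult_le_one)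
  have "(\<Sum>j<n. (1 - q * F x)^j) \<le> (\<Sum>j<n. 1)"
    by (rule sum_mono) (use b in \<open>auto intro: power_le_one\<close>)
  moreover have "0 \<le> (\<Sum>j<n. (1 - q * F x)^j)" using b by (auto intro: sum_nonneg)
  ultimately show ?thesis unfolding Phi_eq[OF assms(1)] using assms
    by (auto simp: divide_le_eq mult_left_mono intro!: divide_nonneg_nonneg)
qed

lemma F_bounds:
  fixes F :: "real \<Rightarrow> real"
  assumes "mono F" "(F \<longlongrightarrow> 0) at_bot" "(F \<longlongrightarrow> 1) at_top"
  shows "0 \<le> F x \<and> F x \<le> 1"
proof
  show "0 \<le> F x"
    by (rule tendsto_upperbound[OF assms(2)]) (auto simp: eventually_at_bot_linorder intro!: exI[of _ x] monoD[OF assms(1)])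
  show "F x \<le> 1"
    by (rule tendsto_lowerbound[OF assms(3)]) (auto simp: eventually_at_top_linorder intro!: exI[of _ x] monoD[OF assms(1)])
qed

lemma Phi_cont: assumes "continuous_on UNIV F" shows "continuous_on UNIV (\<lambda>x. Phi n F q x)"
proof -
  have "continuous_on UNIV (\<lambda>x. q * (\<Sum>k\<in>{0..n-1}. real ((n-1) choose k) * (q * F x) ^ k * (1 - q * F x) ^ (n - 1 - k) / real (k + 1)))"
    by (intro continuous_intros assms) auto
  then show ?thesis unfolding Phi_def Let_def .
qed
lemma Psi_cont: assumes "continuous_on UNIV F" shows "continuous_on UNIV (Psi n F L mu q v K va qa)"
  unfolding Psi_def by (intro continuous_intros Phi_cont assms)

theorem lemma1:
  fixes n L K :: nat and mu q v va qa :: "nat \<Rightarrow> real"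
    and F f :: "real \<Rightarrow> real" and cl cu :: ereal
  defines "\<Psi> \<equiv> Psi n F L mu q v K va qa"
  assumes n: "1 \<le> n"
    and dist: "admissible_cost_dist cl cu F f"
    and mu: "\<forall>l<L. 0 < mu l \<and> mu l \<le> 1"
    and q: "\<forall>l<L. 0 < q l \<and> q l \<le> 1"
    and v: "\<forall>l<L. 0 \<le> v l"
    and va: "\<forall>k<K. 0 \<le> va k"
    and qa: "\<forall>k<K. 0 \<le> qa k \<and> qa k \<le> 1"
  shows
    "(\<forall>c. cl = ereal c \<and> \<Psi> c \<le> c \<longrightarrow> {ch. sym_eq_threshold cl cu \<Psi> ch} = {c})
     \<and> (\<forall>c. cu = ereal c \<and> c \<le> \<Psi> c \<longrightarrow> {ch. sym_eq_threshold cl cu \<Psi> ch} = {c})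
     \<and> ((\<not> (\<exists>c. cl = ereal c \<and> \<Psi> c \<le> c) \<and> \<not> (\<exists>c. cu = ereal c \<and> c \<le> \<Psi> c)) \<longrightarrow>
          (\<exists>!ch. ch \<in> cost_support cl cu \<and> ch = \<Psi> ch) \<and>
          (\<forall>ch. sym_eq_threshold cl cu \<Psi> ch \<longleftrightarrow> (ch \<in> cost_support cl cu \<and> ch = \<Psi> ch)))"
proof -
  have cl_cu: "cl < cu" and cu0: "0 < cu" and Fm: "mono F" and Fc: "continuous_on UNIV F"
    and F0: "(F \<longlongrightarrow> 0) at_bot" and F1: "(F \<longlongrightarrow> 1) at_top"
    using dist unfolding admissible_cost_dist_def by auto
  have Fb: "0 \<le> F x" "F x \<le> 1" for x using F_bounds[OF Fm F0 F1] by auto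
  have Psi_anti: "\<Psi> y \<le> \<Psi> x" if "x \<le> y" for x y
  proof -
    have Fxy: "F x \<le> F y" using Fm that by (simp add: monoD)
    show ?thesis unfolding \<Psi>_def Psi_def
    proof (rule add_mono; rule sum_mono)
      fix l assume "l \<in> {..<L}"
      then have "0 \<le> v l * mu l" "0 \<le> q l" "q l \<le> 1" using mu q v by auto
      then show "v l * mu l * Phi n F (q l) y \<le> v l * mu l * Phi n F (q l) x"
        using Phi_mono[of n "q l" F x y] n Fb[of x] Fb[of y] Fxy by (simp add: mult_left_mono)
    next
      fix k assume "k \<in> {..<K}"
      then have "0 \<le> va k" "0 \<le> qa k" "qa k \<le> 1" using va qa by auto
      then show "va k * Phi n F (qa k) y \<le> va k * Phi n F (qa k) x"
        using Phi_mono[of n "qa k" F x y] n Fb[of x] Fb[of y] Fxy by (simp add: mult_left_mono)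
    qed
  qed
  define B where "B = (\<Sum>l<L. v l * mu l) + (\<Sum>k<K. va k)"
  have Psi_bd: "0 \<le> \<Psi> x \<and> \<Psi> x \<le> B" for x
  proof -
    have a: "0 \<le> v l * mu l * Phi n F (q l) x \<and> v l * mu l * Phi n F (q l) x \<le> v l * mu l"
      if "l < L" for l
    proof -
      have "0 \<le> v l * mu l" "0 \<le> q l" "q l \<le> 1" using mu q v that by auto
      then show ?thesis using Phi_le[of n "q l" F x] n Fb[of x]
        by (auto simp: mult_left_le)
    qed
    have b: "0 \<le> va k * Phi n F (qa k) x \<and> va k * Phi n F (qa k) x \<le> va k"
      if "k < K" for k
    proof -
      have "0 \<le> va k" "0 \<le> qa k" "qa k \<le> 1" using va qa that by auto
      then show ?thesis using Phi_le[of n "qa k" F x] n Fb[of x]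
        by (auto simp: mult_left_le)
    qed
    show ?thesis unfolding \<Psi>_def Psi_def B_def
      by (intro conjI add_nonneg_nonneg sum_nonneg add_mono sum_mono; simp add: a b)
  qed
  have Psi_cont: "continuous_on UNIV \<Psi>"
    unfolding \<Psi>_def by (rule Psi_cont[OF Fc])
  have supp: "x \<in> cost_support cl cu \<longleftrightarrow> cl \<le> ereal x \<and> ereal x \<le> cu" for x
    by (simp add: cost_support_def)
  have P1: "{ch. sym_eq_threshold cl cu \<Psi> ch} = {c}" if c: "cl = ereal c" "\<Psi> c \<le> c" for c
  proof -
    have "sym_eq_threshold cl cu \<Psi> c"
      unfolding sym_eq_threshold_def using c cl_cu by (auto simp: cost_support_def)
    moreover have "ch = c" if "sym_eq_threshold cl cu \<Psi> ch" for ch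
    proof (rule ccontr)
      assume ne: "ch \<noteq> c"
      have s: "cl \<le> ereal ch" "ereal ch \<le> cu"
        and lo: "\<And>x. cl \<le> ereal x \<Longrightarrow> ereal x \<le> cu \<Longrightarrow> x < ch \<Longrightarrow> 0 \<le> \<Psi> ch - x"
        using that unfolding sym_eq_threshold_def by (auto simp: cost_support_def)
      have gt: "c < ch" using s(1) c ne by auto
      define m where "m = (c + ch) / 2"
      have "m \<le> ch" using gt by (simp add: m_def)
      then have "ereal m \<le> cu" using s(2) by (meson ereal_less_eq(3) order_trans)
      moreover have "cl \<le> ereal m" using gt c by (simp add: m_def)
      ultimately have "cl \<le> ereal m" "ereal m \<le> cu" by auto
      then have "m \<le> \<Psi> ch" using lo[of m] gt by (auto simp: m_def)
      moreover have "\<Psi> ch \<le> \<Psi> c" using Psi_anti gt by auto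
      ultimately show False using c gt by (auto simp: m_def)
    qed
    ultimately show ?thesis by blast
  qed
  have P2: "{ch. sym_eq_threshold cl cu \<Psi> ch} = {c}" if c: "cu = ereal c" "c \<le> \<Psi> c" for c
  proof -
    have "sym_eq_threshold cl cu \<Psi> c"
      unfolding sym_eq_threshold_def using c cl_cu by (auto simp: cost_support_def)
    moreover have "ch = c" if "sym_eq_threshold cl cu \<Psi> ch" for ch
    proof (rule ccontr)
      assume ne: "ch \<noteq> c"
      have s: "cl \<le> ereal ch" "ereal ch \<le> cu"
        and hi: "\<And>x. cl \<le> ereal x \<Longrightarrow> ereal x \<le> cu \<Longrightarrow> ch < x \<Longrightarrow> \<Psi> ch - x \<le> 0"
        using that unfolding sym_eq_threshold_def by (auto simp: cost_support_def)
      have lt: "ch < c" using s(2) c ne by auto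
      define m where "m = (c + ch) / 2"
      have "ch \<le> m" using lt by (simp add: m_def)
      then have "cl \<le> ereal m" using s(1) by (meson ereal_less_eq(3) order_trans)
      moreover have "ereal m \<le> cu" using lt c by (auto simp: m_def)
      ultimately have "\<Psi> ch \<le> m" using hi[of m] lt by (auto simp: m_def)
      moreover have "\<Psi> c \<le> \<Psi> ch" using Psi_anti lt by auto
      ultimately show False using c lt by (auto simp: m_def)
    qed
    ultimately show ?thesis by blast
  qed
  have P3: "(\<exists>!ch. ch \<in> cost_support cl cu \<and> ch = \<Psi> ch) \<and>
          (\<forall>ch. sym_eq_threshold cl cu \<Psi> ch \<longleftrightarrow> (ch \<in> cost_support cl cu \<and> ch = \<Psi> ch))"
    if h1: "\<not> (\<exists>c. cl = ereal c \<and> \<Psi> c \<le> c)" and h2: "\<not> (\<exists>c. cu = ereal c \<and> c \<le> \<Psi> c)"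
  proof -
    obtain a where a: "cl \<le> ereal a" "ereal a \<le> cu" "a - \<Psi> a \<le> 0"
    proof (cases cl)
      case (real c0)
      then show ?thesis using that[of c0] h1 cl_cu by force
    next
      case PInf then show ?thesis using cl_cu by simp
    next
      case MInf
      have "ereal (-1) \<le> cu" using cu0 by (cases cu) auto
      then show ?thesis using that[of "-1"] MInf Psi_bd[of "-1"] by auto
    qed
    obtain b where b: "cl \<le> ereal b" "ereal b \<le> cu" "0 \<le> b - \<Psi> b"
    proof (cases cu)
      case (real d0)
      then show ?thesis using that[of d0] h2 cl_cu by force
    next
      case MInf then show ?thesis using cl_cu by simp
    next
      case PInf
      define b where "b = max (B + 1) (real_of_ereal cl)"
      have "cl \<le> ereal b" using cl_cu PInf by (cases cl) (auto simp: b_def)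
      then show ?thesis using that[of b] PInf Psi_bd[of b] by (auto simp: b_def)
    qed
    have ab: "a \<le> b"
    proof (rule ccontr)
      assume "\<not> a \<le> b"
      then have "\<Psi> a \<le> \<Psi> b" using Psi_anti by auto
      then show False using a b \<open>\<not> a \<le> b\<close> by auto
    qed
    have "continuous_on {a..b} (\<lambda>x. x - \<Psi> x)"
      using Psi_cont by (intro continuous_intros) (auto intro: continuous_on_subset)
    then obtain x where x: "a \<le> x" "x \<le> b" "x - \<Psi> x = 0"
      using IVT'[of "\<lambda>x. x - \<Psi> x" a 0 b] a b ab by auto
    have xs: "x \<in> cost_support cl cu" unfolding supp
      using a b x by (meson ereal_less_eq(3) order_trans)
    have uniq: "y = z" if "y = \<Psi> y" "z = \<Psi> z" for y z
    proof (rule ccontr)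
      assume "y \<noteq> z"
      then consider "y < z" | "z < y" by linarith
      then show False
      proof cases
        case 1 then have "\<Psi> z \<le> \<Psi> y" using Psi_anti by auto
        then show False using that 1 by auto
      next
        case 2 then have "\<Psi> y \<le> \<Psi> z" using Psi_anti by auto
        then show False using that 2 by auto
      qed
    qed
    have ex1: "\<exists>!ch. ch \<in> cost_support cl cu \<and> ch = \<Psi> ch"
      using xs x uniq by (intro ex1I[of _ x]) auto
    have eqv: "sym_eq_threshold cl cu \<Psi> ch \<longleftrightarrow> (ch \<in> cost_support cl cu \<and> ch = \<Psi> ch)" for ch
    proof
      assume "ch \<in> cost_support cl cu \<and> ch = \<Psi> ch"
      then show "sym_eq_threshold cl cu \<Psi> ch" unfolding sym_eq_threshold_def by auto
    next
      assume se: "sym_eq_threshold cl cu \<Psi> ch"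
      have s: "cl \<le> ereal ch" "ereal ch \<le> cu"
        and lo: "\<And>x. cl \<le> ereal x \<Longrightarrow> ereal x \<le> cu \<Longrightarrow> x < ch \<Longrightarrow> 0 \<le> \<Psi> ch - x"
        and hi: "\<And>x. cl \<le> ereal x \<Longrightarrow> ereal x \<le> cu \<Longrightarrow> ch < x \<Longrightarrow> \<Psi> ch - x \<le> 0"
        using se unfolding sym_eq_threshold_def by (auto simp: cost_support_def)
      have "\<not> \<Psi> ch > ch"
      proof
        assume gt: "\<Psi> ch > ch"
        have ne: "cu \<noteq> ereal ch" using h2 gt by auto
        then have lt: "ereal ch < cu" using s by auto
        obtain r where r: "ch < r" "ereal r < cu" "r < \<Psi> ch"
        proof (cases cu)
          case (real d)
          with lt have "ch < d" by simp
          then show ?thesis using that[of "(ch + min d (\<Psi> ch))/2"] gt real by auto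
        next
          case PInf then show ?thesis using that[of "(ch + \<Psi> ch)/2"] gt by auto
        next
          case MInf then show ?thesis using lt by simp
        qed
        have "ereal ch \<le> ereal r" using r(1) by simp
        then have "cl \<le> ereal r" using s(1) by (meson order_trans)
        then have "\<Psi> ch \<le> r" using hi[of r] r by force
        then show False using r by auto
      qed
      moreover have "\<not> \<Psi> ch < ch"
      proof
        assume lt0: "\<Psi> ch < ch"
        have ne: "cl \<noteq> ereal ch" using h1 lt0 by auto
        then have lt: "cl < ereal ch" using s by auto
        obtain r where r: "cl < ereal r" "r < ch" "\<Psi> ch < r"
        proof (cases cl)
          case (real d)
          with lt have "d < ch" by simp
          then show ?thesis using that[of "(ch + max d (\<Psi> ch))/2"] lt0 real by auto
        next
          case MInf then show ?thesis using that[of "(ch + \<Psi> ch)/2"] lt0 by auto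
        next
          case PInf then show ?thesis using lt by simp
        qed
        have "ereal r \<le> ereal ch" using r(2) by simp
        then have "ereal r \<le> cu" using s(2) by (meson order_trans)
        then have "r \<le> \<Psi> ch" using lo[of r] r by force
        then show False using r by auto
      qed
      ultimately show "ch \<in> cost_support cl cu \<and> ch = \<Psi> ch" using se
        unfolding sym_eq_threshold_def by auto
    qed
    show ?thesis using ex1 eqv by blast
  qed
  show ?thesis using P1 P2 P3 by blast
qed

end
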